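(* Let $I$ be a bounded open interval containing $0$, let $f\in C^\infty(I)$ be real-valued, and suppose the series $\hat f$ converges uniformly on $I$ (its sum need not be constant). Let $F(x):=\int_0^x f(s)\,ds$ for $x\in I$. Then the series $\hat F$ converges uniformly on $I$ and $\hat F(x)=F(0)=0$ for all $x\in I$.
   Context: For a smooth function $h$ on an interval containing the point $t$, $\hat h(t)$ denotes the series $\hat h(t):=\sum_{n=0}^{\infty}\frac{(-1)^n}{n!}\,t^n h^{(n)}(t)$; convergence of $\hat h$ refers to convergence of its partial sums, and $\hat h(t)$ also denotes the sum. *)

theory Defs
  imports "HOL-Analysis.Analysis"
begin

definition nth_deriv :: "nat \<Rightarrow> (real \<Rightarrow> real) \<Rightarrow> real \<Rightarrow> real" where
  "nth_deriv n h = (deriv ^^ n) h"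

definition smooth_on :: "real set \<Rightarrow> (real \<Rightarrow> real) \<Rightarrow> bool" where
  "smooth_on I h \<longleftrightarrow>
     (\<forall>n. \<forall>x\<in>I. (nth_deriv n h has_real_derivative nth_deriv (Suc n) h x) (at x))"

definition hat_term :: "(real \<Rightarrow> real) \<Rightarrow> nat \<Rightarrow> real \<Rightarrow> real" where
  "hat_term h n t = (-1) ^ n / fact n * t ^ n * nth_deriv n h t"

definition hat_partial :: "(real \<Rightarrow> real) \<Rightarrow> nat \<Rightarrow> real \<Rightarrow> real" where
  "hat_partial h N t = (\<Sum>n<N. hat_term h n t)"

end

theory Submission
  imports Defs
begin

lemma iter_deriv_cong:
  assumes "open S" "\<And>x. x \<in> S \<Longrightarrow> g x = h x"
  shows "x \<in> S \<Longrightarrow> (deriv ^^ n) g x = (deriv ^^ n) h x"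
proof (induction n arbitrary: x)
  case 0 then show ?case using assms by simp
next
  case (Suc n)
  have ev: "eventually (\<lambda>y. y \<in> S) (nhds x)"
    using assms(1) Suc.prems by (rule eventually_nhds_in_open)
  have "eventually (\<lambda>y. (deriv ^^ n) g y = (deriv ^^ n) h y) (nhds x)"
    using ev by eventually_elim (rule Suc.IH)
  then show ?case by (simp add: deriv_cong_ev)
qed

lemma tel_aux:
  fixes k n c X Y :: real
  assumes "k * n = - c"
  shows "c * X + k * (n * X + Y) = k * Y"
proof -
  have "k * (n * X + Y) = (k * n) * X + k * Y" by (simp add: algebra_simps)
  then show ?thesis using assms by simp
qed

theorem theorem9:
  fixes a b :: real and f :: "real \<Rightarrow> real"
  assumes "a < 0" and "0 < b"
    and "smooth_on {a<..<b} f"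
    and "uniformly_convergent_on {a<..<b} (hat_partial f)"
  defines "F \<equiv> (\<lambda>x. LBINT s=0..x. f s)"
  shows "uniformly_convergent_on {a<..<b} (hat_partial F)
         \<and> (\<forall>x\<in>{a<..<b}. (\<lambda>n. hat_term F n x) sums F 0 \<and> F 0 = 0)"
proof -
  define I where "I = {a<..<b}"
  have oI: "open I" unfolding I_def by simp
  have sm: "\<And>n x. x \<in> I \<Longrightarrow> (nth_deriv n f has_real_derivative nth_deriv (Suc n) f x) (at x)"
    using assms(3) unfolding smooth_on_def I_def by blast
  have f0: "nth_deriv 0 f = f" by (simp add: nth_deriv_def)
  have contf: "continuous_on I f"
    using sm[of _ 0] f0 by (metis DERIV_isCont continuous_at_imp_continuous_on)
  have F0: "F 0 = 0" unfolding F_def by simp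
  have Fd: "(F has_real_derivative f x) (at x)" if x: "x \<in> I" for x
  proof -
    define d where "d = (a + min 0 x) / 2"
    define e where "e = (b + max 0 x) / 2"
    have dx: "a < d" "d < 0" "d < x" "e < b" "0 < e" "x < e"
      using x assms(1,2) unfolding d_def e_def I_def by auto
    have "{d..e} \<subseteq> I" using dx unfolding I_def by auto
    then have "continuous_on {d..e} f" using contf continuous_on_subset by blast
    then have "(F has_vector_derivative f x) (at x within {d..e})"
      unfolding F_def using interval_integral_FTC2[of d 0 e f x] dx by (auto simp: zero_ereal_def)
    then have "(F has_vector_derivative f x) (at x within {d<..<e})"
      by (rule has_vector_derivative_within_subset) auto
    then have "(F has_vector_derivative f x) (at x)"
      using dx by (subst (asm) has_vector_derivative_within_open) auto
    then show ?thesis by (simp add: has_real_derivative_iff_has_vector_derivative)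
  qed
  have dF: "deriv F x = f x" if "x \<in> I" for x using Fd[OF that] by (rule DERIV_imp_deriv)
  have ndF: "nth_deriv (Suc n) F x = nth_deriv n f x" if "x \<in> I" for n x
  proof -
    have "nth_deriv (Suc n) F x = (deriv ^^ n) (deriv F) x"
      unfolding nth_deriv_def by (simp add: funpow_Suc_right del: funpow.simps)
    also have "\<dots> = (deriv ^^ n) f x"
      by (rule iter_deriv_cong[OF oI dF that])
    finally show ?thesis by (simp add: nth_deriv_def)
  qed
  have D: "(nth_deriv n F has_real_derivative nth_deriv (Suc n) F x) (at x)" if x: "x \<in> I" for n x
  proof (cases n)
    case 0
    then show ?thesis using Fd[OF x] ndF[OF x, of 0] f0 by (simp add: nth_deriv_def)
  next
    case (Suc m)
    have "(nth_deriv m f has_real_derivative nth_deriv (Suc (Suc m)) F x) (at x)"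
      using sm[OF x, of m] ndF[OF x, of "Suc m"] by simp
    then show ?thesis unfolding Suc
      by (rule has_field_derivative_transform_within_open[OF _ oI x]) (simp add: ndF)
  qed
  have tel: "(hat_partial F (Suc N) has_real_derivative
               (-1) ^ N / fact N * x ^ N * nth_deriv (Suc N) F x) (at x)" if x: "x \<in> I" for N x
  proof (induction N)
    case 0
    have "hat_partial F (Suc 0) = nth_deriv 0 F"
      by (auto simp: hat_partial_def hat_term_def)
    then show ?case using D[OF x, of 0] by simp
  next
    case (Suc N)
    have eq: "hat_partial F (Suc (Suc N)) = (\<lambda>t. hat_partial F (Suc N) t +
       (-1) ^ Suc N / fact (Suc N) * t ^ Suc N * nth_deriv (Suc N) F t)"
      by (auto simp: hat_partial_def hat_term_def)
    have "((\<lambda>t. (-1) ^ Suc N / fact (Suc N) * t ^ Suc N * nth_deriv (Suc N) F t)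
      has_real_derivative (-1) ^ Suc N / fact (Suc N) *
        (real (Suc N) * x ^ N * nth_deriv (Suc N) F x + x ^ Suc N * nth_deriv (Suc (Suc N)) F x)) (at x)"
    proof -
      have A: "((\<lambda>t. t ^ Suc N) has_real_derivative real (Suc N) * x ^ N) (at x)"
        using DERIV_pow[of "Suc N" x UNIV] by simp
      have B: "((\<lambda>t. (-1) ^ Suc N / fact (Suc N) * t ^ Suc N) has_real_derivative
          (-1) ^ Suc N / fact (Suc N) * (real (Suc N) * x ^ N)) (at x)"
        by (rule DERIV_cmult[OF A])
      show ?thesis
        by (rule DERIV_cong[OF DERIV_mult[OF B D[OF x, of "Suc N"]]]) (simp add: algebra_simps add_divide_distrib)
    qed
    from DERIV_add[OF Suc.IH this] have
      "(hat_partial F (Suc (Suc N)) has_real_derivative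
         (-1) ^ N / fact N * x ^ N * nth_deriv (Suc N) F x + (-1) ^ Suc N / fact (Suc N) *
        (real (Suc N) * x ^ N * nth_deriv (Suc N) F x + x ^ Suc N * nth_deriv (Suc (Suc N)) F x)) (at x)"
      unfolding eq .
    moreover have "(-1) ^ N / fact N * x ^ N * nth_deriv (Suc N) F x + (-1) ^ Suc N / fact (Suc N) *
        (real (Suc N) * x ^ N * nth_deriv (Suc N) F x + x ^ Suc N * nth_deriv (Suc (Suc N)) F x)
       = (-1) ^ Suc N / fact (Suc N) * x ^ Suc N * nth_deriv (Suc (Suc N)) F x"
    proof -
      have "(-1) ^ Suc N / fact (Suc N) * real (Suc N) = - ((-1) ^ N / fact N :: real)"
        by (simp add: fact_Suc divide_simps)
      from tel_aux[OF this, of "x ^ N * nth_deriv (Suc N) F x" "x ^ Suc N * nth_deriv (Suc (Suc N)) F x"]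
      show ?thesis by (simp add: mult.assoc)
    qed
    ultimately show ?case by simp
  qed
  have tel2: "(hat_partial F (Suc N) has_real_derivative hat_term f N x) (at x)" if x: "x \<in> I" for N x
    using tel[OF x, of N] ndF[OF x, of N] by (simp add: hat_term_def)
  have H0: "hat_partial F (Suc N) 0 = 0" for N
    unfolding hat_partial_def sum.lessThan_Suc_shift
    using F0 by (simp add: hat_term_def nth_deriv_def zero_ereal_def)
  define R where "R = max (-a) b"
  have R: "R > 0" "\<And>x. x \<in> I \<Longrightarrow> \<bar>x\<bar> \<le> R"
    using assms(1,2) unfolding R_def I_def by auto
  have bound: "\<exists>z\<in>I. \<bar>hat_partial F (Suc N) x\<bar> \<le> \<bar>x\<bar> * \<bar>hat_term f N z\<bar>"
    if x: "x \<in> I" for N x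
  proof (cases "x = 0")
    case True then show ?thesis using H0 x by auto
  next
    case False
    show ?thesis
    proof (cases "x > 0")
      case True
      have "\<exists>z. 0 < z \<and> z < x \<and> hat_partial F (Suc N) x - hat_partial F (Suc N) 0 = (x - 0) * hat_term f N z"
        by (rule MVT2[OF True]) (rule tel2, use x True assms(1) in \<open>auto simp: I_def\<close>)
      then obtain z where z: "0 < z" "z < x" "hat_partial F (Suc N) x = x * hat_term f N z"
        using H0 by auto
      have "z \<in> I" using z x assms(1) by (auto simp: I_def)
      then show ?thesis using z by (auto simp: abs_mult)
    next
      case nT: False
      with False have xn: "x < 0" by auto
      have "\<exists>z. x < z \<and> z < 0 \<and> hat_partial F (Suc N) 0 - hat_partial F (Suc N) x = (0 - x) * hat_term f N z"
        by (rule MVT2[OF xn]) (rule tel2, use x xn assms(2) in \<open>auto simp: I_def\<close>)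
      then obtain z where z: "x < z" "z < 0" "hat_partial F (Suc N) x = x * hat_term f N z"
        using H0 by auto
      have "z \<in> I" using z x assms(2) by (auto simp: I_def)
      then show ?thesis using z by (auto simp: abs_mult)
    qed
  qed
  have small: "\<exists>M. \<forall>N\<ge>M. \<forall>x\<in>I. \<bar>hat_term f N x\<bar> < e" if e: "e > 0" for e
  proof -
    have "uniformly_Cauchy_on I (hat_partial f)"
      using assms(4) unfolding I_def by (rule uniformly_convergent_Cauchy)
    then obtain M where M: "\<And>x m n. x \<in> I \<Longrightarrow> m \<ge> M \<Longrightarrow> n \<ge> M \<Longrightarrow> dist (hat_partial f m x) (hat_partial f n x) < e"
      using e unfolding uniformly_Cauchy_on_def by metis
    have "\<bar>hat_term f N x\<bar> < e" if "N \<ge> M" "x \<in> I" for N x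
      using M[OF that(2), of "Suc N" N] that by (simp add: hat_partial_def dist_real_def)
    then show ?thesis by blast
  qed
  have conv: "\<exists>M. \<forall>n\<ge>M. \<forall>x\<in>I. \<bar>hat_partial F n x\<bar> < e" if e: "e > 0" for e
  proof -
    obtain M where M: "\<And>N x. N \<ge> M \<Longrightarrow> x \<in> I \<Longrightarrow> \<bar>hat_term f N x\<bar> < e / R"
      using small[of "e / R"] e R(1) by auto
    have "\<bar>hat_partial F n x\<bar> < e" if n: "n \<ge> Suc M" and x: "x \<in> I" for n x
    proof -
      obtain N where N: "n = Suc N" "N \<ge> M" using n by (cases n) auto
      obtain z where z: "z \<in> I" "\<bar>hat_partial F (Suc N) x\<bar> \<le> \<bar>x\<bar> * \<bar>hat_term f N z\<bar>"
        using bound[OF x, of N] by blast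
      have "\<bar>x\<bar> * \<bar>hat_term f N z\<bar> \<le> R * \<bar>hat_term f N z\<bar>"
        using R(2)[OF x] by (simp add: mult_right_mono)
      also have "\<dots> < R * (e / R)" using M[OF N(2) z(1)] R(1) by (intro mult_strict_left_mono) auto
      also have "\<dots> = e" using R(1) by simp
      finally show ?thesis using z N by simp
    qed
    then show ?thesis by blast
  qed
  have ul: "uniform_limit I (hat_partial F) (\<lambda>_. 0) sequentially"
    unfolding uniform_limit_sequentially_iff dist_real_def using conv by simp
  have uc: "uniformly_convergent_on {a<..<b} (hat_partial F)"
    using ul unfolding uniformly_convergent_on_def I_def by blast
  have "(\<lambda>n. hat_term F n x) sums F 0" if x: "x \<in> I" for x
  proof -
    have "(\<lambda>n. hat_partial F n x) \<longlonglongrightarrow> 0"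
      using tendsto_uniform_limitI[OF ul x] .
    then show ?thesis unfolding sums_def hat_partial_def F0 .
  qed
  then show ?thesis using uc F0 unfolding I_def by blast
qed

end
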